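(* Let $k\ge 1$, let $A,B_1,\dots,B_k,C_1,\dots,C_k\in\mathbb{C}^{r\times r}$ with $C_i+mI$ invertible for all integers $m\ge 0$ and all $i$, and assume $AB_i=B_iA$, $B_iB_j=B_jB_i$, $C_iC_j=C_jC_i$ for all $i,j\in\{1,\dots,k\}$. Let $n\ge 1$ be an integer and suppose $A+mI$ is invertible for all $m\ge 0$. Then $$F_{\mathcal A}[A+nI]=F_{\mathcal A}+\sum_{i=1}^{k} x_iB_i\Big[\sum_{n_1=1}^{n}F_{\mathcal A}[A+n_1I,\,B_i+I,\,C_i+I]\Big]C_i^{-1}.$$ Furthermore, if $A-n_1I$ is invertible for every $0\le n_1\le n$, then $$F_{\mathcal A}[A-nI]=F_{\mathcal A}-\sum_{i=1}^{k} x_iB_i\Big[\sum_{n_1=0}^{n-1}F_{\mathcal A}[A-n_1I,\,B_i+I,\,C_i+I]\Big]C_i^{-1}.$$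
   Context: For $M\in\mathbb{C}^{r\times r}$ the Pochhammer symbol is $(M)_0=I$, $(M)_m=M(M+I)\cdots(M+(m-1)I)$ for $m\ge1$, and $(M)^{-1}_m$ denotes $((M)_m)^{-1}$ (when it exists). The Lauricella matrix function is $$F_{\mathcal A}=F_{\mathcal A}[A,B_1,\dots,B_k;C_1,\dots,C_k;x_1,\dots,x_k]=\sum_{m_1,\dots,m_k\ge0}(A)_{m_1+\cdots+m_k}\prod_{i=1}^k(B_i)_{m_i}\prod_{i=1}^k(C_i)^{-1}_{m_i}\prod_{i=1}^k\frac{x_i^{m_i}}{m_i!},$$ with $x_1,\dots,x_k$ complex (scalar) variables; products of matrices are taken in the written order of increasing $i$. Identities are understood as identities of formal power series in $x_1,\dots,x_k$ with matrix coefficients (hence also wherever the series converge). Notation: $F_{\mathcal A}[A+nI, B_i+I, C_i+I]$ means $F_{\mathcal A}$ with $A$ replaced by $A+nI$, $B_i$ by $B_i+I$, $C_i$ by $C_i+I$, all other parameters and variables unchanged; $F_{\mathcal A}$ alone means the unshifted function. *)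

theory Defs
  imports "HOL-Analysis.Analysis"
begin

type_synonym 'r cmat = "complex ^ 'r ^ 'r"

fun mpoch :: "'r::finite cmat \<Rightarrow> nat \<Rightarrow> 'r cmat" where
  "mpoch M 0 = mat 1"
| "mpoch M (Suc m) = mpoch M m ** (M + real m *\<^sub>R mat 1)"

fun oprod :: "(nat \<Rightarrow> 'r::finite cmat) \<Rightarrow> nat \<Rightarrow> 'r cmat" where
  "oprod f 0 = mat 1"
| "oprod f (Suc k) = oprod f k ** f (Suc k)"

text \<open>Formal power series in x_1..x_k with matrix coefficients are represented by
  their coefficient function on multi-indices m :: nat \<Rightarrow> nat supported in {1..k}
  (the coefficient of x_1^(m 1) ... x_k^(m k)); off-support values are 0.\<close>
definition msupp :: "nat \<Rightarrow> (nat \<Rightarrow> nat) \<Rightarrow> bool" where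
  "msupp k m \<longleftrightarrow> (\<forall>i. i \<notin> {1..k} \<longrightarrow> m i = 0)"

definition lauricellaA ::
  "nat \<Rightarrow> 'r::finite cmat \<Rightarrow> (nat \<Rightarrow> 'r cmat) \<Rightarrow> (nat \<Rightarrow> 'r cmat) \<Rightarrow> (nat \<Rightarrow> nat) \<Rightarrow> 'r cmat" where
  "lauricellaA k A B C m =
     (if msupp k m then
        (1 / real (\<Prod>i\<in>{1..k}. fact (m i))) *\<^sub>R
          (mpoch A (\<Sum>i\<in>{1..k}. m i) ** oprod (\<lambda>i. mpoch (B i) (m i)) k
             ** oprod (\<lambda>i. matrix_inv (mpoch (C i) (m i))) k)
      else 0)"

text \<open>Multiplication of a series by the variable x_i (coefficient shift).\<close>
definition xmul :: "nat \<Rightarrow> ((nat \<Rightarrow> nat) \<Rightarrow> 'r::finite cmat) \<Rightarrow> (nat \<Rightarrow> nat) \<Rightarrow> 'r cmat" where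
  "xmul i S m = (if m i = 0 then 0 else S (m(i := m i - 1)))"

end

theory Submission
  imports Defs
begin

lemma mm_rdistrib: "((X::'r::finite cmat) + Y) ** Z = X ** Z + Y ** Z"
  by (vector matrix_matrix_mult_def sum.distrib[symmetric] field_simps)

lemma mm_ldiff: "(X::'r::finite cmat) ** (Y - Z) = X ** Y - X ** Z"
  by (vector matrix_matrix_mult_def sum_subtractf[symmetric] field_simps)

lemma mm_rdiff: "((X::'r::finite cmat) - Y) ** Z = X ** Z - Y ** Z"
  by (vector matrix_matrix_mult_def sum_subtractf[symmetric] field_simps)

lemma mm_sum_left: "(X::'r::finite cmat) ** sum (f::_\<Rightarrow>'r::finite cmat) S = (\<Sum>s\<in>S. X ** f s)"
  by (induction S rule: infinite_finite_induct) (auto simp: matrix_add_ldistrib)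

lemma mm_sum_right: "sum (f::_\<Rightarrow>'r::finite cmat) S ** (X::'r::finite cmat) = (\<Sum>s\<in>S. f s ** X)"
  by (induction S rule: infinite_finite_induct) (auto simp: mm_rdistrib)

lemma scale_mat_l: "(c *\<^sub>R mat 1) ** (X::'r::finite cmat) = c *\<^sub>R X"
  by (metis scalar_matrix_assoc matrix_mul_lid)

lemma scale_mat_r: "(X::'r::finite cmat) ** (c *\<^sub>R mat 1) = c *\<^sub>R X"
  by (metis matrix_scalar_ac matrix_mul_rid)

lemma comm_shift:
  assumes "(X::'r::finite cmat) ** Y = Y ** X"
  shows "X ** (Y + c *\<^sub>R mat 1) = (Y + c *\<^sub>R mat 1) ** X"
  using assms by (simp add: matrix_add_ldistrib mm_rdistrib scale_mat_l scale_mat_r)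

lemma comm_shift_minus:
  assumes "(X::'r::finite cmat) ** Y = Y ** X"
  shows "X ** (Y - c *\<^sub>R mat 1) = (Y - c *\<^sub>R mat 1) ** X"
  using assms by (simp add: mm_ldiff mm_rdiff scale_mat_l scale_mat_r)

lemma comm_one:
  "(X::'r::finite cmat) ** (X + mat 1) = (X + mat 1) ** X"
  by (simp add: matrix_add_ldistrib mm_rdistrib)

lemma comm_one':
  assumes "(X::'r::finite cmat) ** Y = Y ** X"
  shows "X ** (Y + mat 1) = (Y + mat 1) ** X"
  using assms by (simp add: matrix_add_ldistrib mm_rdistrib)

lemma comm_mpoch:
  assumes "(X::'r::finite cmat) ** Y = Y ** X"
  shows "X ** mpoch Y n = mpoch Y n ** X"
proof (induction n)
  case 0 then show ?case by simp
next
  case (Suc n)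
  have "X ** mpoch Y (Suc n) = (X ** mpoch Y n) ** (Y + real n *\<^sub>R mat 1)"
    by (simp add: matrix_mul_assoc)
  also have "\<dots> = mpoch Y n ** (X ** (Y + real n *\<^sub>R mat 1))"
    using Suc by (simp add: matrix_mul_assoc)
  also have "\<dots> = mpoch Y (Suc n) ** X"
    using comm_shift[OF assms] by (simp add: matrix_mul_assoc)
  finally show ?case .
qed

lemma mpoch_Suc_left:
  "mpoch (X::'r::finite cmat) (Suc n) = X ** mpoch (X + mat 1) n"
proof (induction n)
  case 0 then show ?case by simp
next
  case (Suc n)
  have e: "X + real (Suc n) *\<^sub>R mat 1 = X + mat 1 + real n *\<^sub>R mat 1"
    by (simp add: scaleR_left_distrib algebra_simps)
  show ?case
    using Suc by (simp only: mpoch.simps e) (simp add: matrix_mul_assoc)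
qed

lemma poch_diff:
  "mpoch ((X::'r::finite cmat) + mat 1) M - mpoch X M = real M *\<^sub>R mpoch (X + mat 1) (M - 1)"
proof (cases M)
  case 0 then show ?thesis by simp
next
  case (Suc N)
  have c: "X ** mpoch (X + mat 1) N = mpoch (X + mat 1) N ** X"
    by (rule comm_mpoch[OF comm_one])
  have "mpoch (X + mat 1) M - mpoch X M
      = mpoch (X + mat 1) N ** (X + mat 1 + real N *\<^sub>R mat 1) - mpoch (X + mat 1) N ** X"
    using Suc c by (simp only: mpoch.simps(2)[of "X + mat 1"] mpoch_Suc_left[of X])
  also have "\<dots> = mpoch (X + mat 1) N ** (real M *\<^sub>R mat 1)"
    using Suc by (simp add: mm_ldiff[symmetric] scaleR_left_distrib algebra_simps)
  also have "\<dots> = real M *\<^sub>R mpoch (X + mat 1) (M - 1)"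
    using Suc by (simp add: scale_mat_r)
  finally show ?thesis .
qed

lemma inv_props:
  assumes "invertible (X::'r::finite cmat)"
  shows "X ** matrix_inv X = mat 1 \<and> matrix_inv X ** X = mat 1"
  using assms unfolding invertible_def matrix_inv_def by (rule someI_ex)

lemma inv_unique:
  assumes "(X::'r::finite cmat) ** (Y::'r::finite cmat) = mat 1"
  shows "matrix_inv X = Y"
proof -
  have yx: "Y ** X = mat 1" using assms matrix_left_right_inverse by blast
  then have "invertible X" unfolding invertible_def using assms by blast
  then have "matrix_inv X ** X = mat 1" using inv_props by blast
  then have "matrix_inv X = (matrix_inv X ** X) ** Y"
    using assms by (metis matrix_mul_assoc matrix_mul_rid)
  then show ?thesis using \<open>matrix_inv X ** X = mat 1\<close> by simp
qed

lemma inv_mult: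
  assumes "invertible (X::'r::finite cmat)" "invertible (Y::'r::finite cmat)"
  shows "matrix_inv (X ** Y) = matrix_inv Y ** matrix_inv X"
proof (rule inv_unique)
  have "X ** Y ** (matrix_inv Y ** matrix_inv X) = X ** (Y ** matrix_inv Y) ** matrix_inv X"
    by (simp add: matrix_mul_assoc)
  then show "X ** Y ** (matrix_inv Y ** matrix_inv X) = mat 1"
    using inv_props[OF assms(1)] inv_props[OF assms(2)] by simp
qed

lemma inv_comm:
  assumes "invertible (X::'r::finite cmat)" "invertible (Y::'r::finite cmat)" "X ** Y = Y ** X"
  shows "matrix_inv X ** matrix_inv Y = matrix_inv Y ** matrix_inv X"
  using inv_mult[OF assms(1,2)] inv_mult[OF assms(2,1)] assms(3) by simp

lemma invertible_mpoch:
  assumes "\<And>m. invertible ((X::'r::finite cmat) + real m *\<^sub>R mat 1)"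
  shows "invertible (mpoch X n)"
proof (induction n)
  case 0
  have "invertible (mat 1 :: 'r cmat)" unfolding invertible_def by (intro exI[of _ "mat 1"]) simp
  then show ?case by simp
next
  case (Suc n) then show ?case using invertible_mult[OF Suc.IH assms] by simp
qed

lemma oprod_cong:
  "(\<And>j. 1 \<le> j \<Longrightarrow> j \<le> k \<Longrightarrow> f j = g j) \<Longrightarrow> oprod f k = oprod g k"
  by (induction k) auto

lemma oprod_comm:
  fixes f :: "nat \<Rightarrow> 'r::finite cmat"
  shows "(\<And>j. 1 \<le> j \<Longrightarrow> j \<le> k \<Longrightarrow> (X::'r::finite cmat) ** f j = f j ** X) \<Longrightarrow> X ** oprod f k = oprod f k ** X"
proof (induction k)
  case 0 then show ?case by simp
next
  case (Suc k)
  have "X ** oprod f (Suc k) = (X ** oprod f k) ** f (Suc k)" by (simp add: matrix_mul_assoc)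
  also have "\<dots> = oprod f k ** (X ** f (Suc k))"
  proof -
    have h: "X ** oprod f k = oprod f k ** X" using Suc by auto
    show ?thesis by (metis h matrix_mul_assoc)
  qed
  also have "\<dots> = oprod f (Suc k) ** X"
  proof -
    have "X ** f (Suc k) = f (Suc k) ** X" by (rule Suc.prems) auto
    then show ?thesis by (simp add: matrix_mul_assoc)
  qed
  finally show ?case .
qed

lemma oprod_left_ins:
  fixes f :: "nat \<Rightarrow> 'r::finite cmat"
  shows "1 \<le> i \<Longrightarrow> i \<le> k \<Longrightarrow> (\<And>j. 1 \<le> j \<Longrightarrow> j \<le> k \<Longrightarrow> (X::'r::finite cmat) ** f j = f j ** X)
   \<Longrightarrow> X ** oprod f k = oprod (f(i := X ** f i)) k"
proof (induction k)
  case 0 then show ?case by simp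
next
  case (Suc k)
  show ?case
  proof (cases "i = Suc k")
    case True
    have "oprod (f(i := X ** f i)) k = oprod f k" by (rule oprod_cong) (use True in auto)
    moreover have "X ** oprod f k = oprod f k ** X" by (rule oprod_comm) (use Suc.prems in auto)
    ultimately show ?thesis using True by (simp del: fun_upd_apply add: matrix_mul_assoc fun_upd_same)
  next
    case False
    have "X ** oprod f k = oprod (f(i := X ** f i)) k"
    proof (rule Suc.IH)
      show "1 \<le> i" using Suc.prems by simp
      show "i \<le> k" using Suc.prems False by simp
      show "\<And>j. 1 \<le> j \<Longrightarrow> j \<le> k \<Longrightarrow> X ** f j = f j ** X" by (rule Suc.prems(3)) auto
    qed
    moreover have "Suc k \<noteq> i" using False by simp
    ultimately show ?thesis by (simp del: fun_upd_apply add: matrix_mul_assoc fun_upd_other)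
  qed
qed

lemma oprod_right_ins:
  fixes g :: "nat \<Rightarrow> 'r::finite cmat"
  shows "1 \<le> i \<Longrightarrow> i \<le> k \<Longrightarrow> (\<And>j. 1 \<le> j \<Longrightarrow> j \<le> k \<Longrightarrow> (Y::'r::finite cmat) ** g j = g j ** Y)
   \<Longrightarrow> oprod g k ** Y = oprod (g(i := g i ** Y)) k"
proof (induction k)
  case 0 then show ?case by simp
next
  case (Suc k)
  show ?case
  proof (cases "i = Suc k")
    case True
    have "oprod (g(i := g i ** Y)) k = oprod g k" by (rule oprod_cong) (use True in auto)
    then show ?thesis using True by (simp del: fun_upd_apply add: matrix_mul_assoc fun_upd_same)
  next
    case False
    have h: "Y ** g (Suc k) = g (Suc k) ** Y" by (rule Suc.prems(3)) auto
    have "oprod g (Suc k) ** Y = (oprod g k ** Y) ** g (Suc k)"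
      by (simp only: oprod.simps) (metis h matrix_mul_assoc)
    also have "oprod g k ** Y = oprod (g(i := g i ** Y)) k"
    proof (rule Suc.IH)
      show "1 \<le> i" using Suc.prems by simp
      show "i \<le> k" using Suc.prems False by simp
      show "\<And>j. 1 \<le> j \<Longrightarrow> j \<le> k \<Longrightarrow> Y ** g j = g j ** Y" by (rule Suc.prems(3)) auto
    qed
    moreover have "Suc k \<noteq> i" using False by simp
    ultimately show ?thesis by (simp del: fun_upd_apply add: fun_upd_other)
  qed
qed


lemma xmul_nonsupp:
  assumes "\<not> msupp k m" "i \<in> {1..k}"
  shows "xmul i (\<lambda>m'. (Bi::'r::finite cmat) ** lauricellaA k A' B' C' m' ** Ci) m = 0"
proof (cases "m i = 0")
  case True then show ?thesis by (simp add: xmul_def)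
next
  case False
  have "\<not> msupp k (m(i := m i - 1))" using assms unfolding msupp_def by auto
  then show ?thesis using False by (simp add: xmul_def lauricellaA_def)
qed

lemma base:
  fixes A A2 :: "'r::finite cmat" and B C :: "nat \<Rightarrow> 'r cmat"
  assumes A2: "A2 = A + mat 1"
    and Cinv: "\<And>i m. i \<in> {1..k} \<Longrightarrow> invertible (C i + real m *\<^sub>R mat 1)"
    and AB: "\<And>i. i \<in> {1..k} \<Longrightarrow> A ** B i = B i ** A"
    and BB: "\<And>i j. i \<in> {1..k} \<Longrightarrow> j \<in> {1..k} \<Longrightarrow> B i ** B j = B j ** B i"
    and CC: "\<And>i j. i \<in> {1..k} \<Longrightarrow> j \<in> {1..k} \<Longrightarrow> C i ** C j = C j ** C i"
  shows "lauricellaA k A2 B C m = lauricellaA k A B C m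
            + (\<Sum>i=1..k. xmul i (\<lambda>m'. B i ** lauricellaA k A2 (B(i := B i + mat 1))
                  (C(i := C i + mat 1)) m' ** matrix_inv (C i)) m)"
proof (cases "msupp k m")
  case False
  have "(\<Sum>i=1..k. xmul i (\<lambda>m'. B i ** lauricellaA k A2 (B(i := B i + mat 1))
                  (C(i := C i + mat 1)) m' ** matrix_inv (C i)) m) = 0"
    by (rule sum.neutral) (use xmul_nonsupp[OF False] in blast)
  then show ?thesis using False by (simp add: lauricellaA_def)
next
  case True
  define M where "M = (\<Sum>j\<in>{1..k}. m j)"
  define fac where "fac = real (\<Prod>j\<in>{1..k}. fact (m j))"
  define PB where "PB = oprod (\<lambda>j. mpoch (B j) (m j)) k"
  define PC where "PC = oprod (\<lambda>j. matrix_inv (mpoch (C j) (m j))) k"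
  define X where "X = mpoch A2 (M - 1) ** PB ** PC"
  have facpos: "fac > 0" unfolding fac_def by (simp add: prod_pos)
  have T: "xmul i (\<lambda>m'. B i ** lauricellaA k A2 (B(i := B i + mat 1))
                  (C(i := C i + mat 1)) m' ** matrix_inv (C i)) m = (real (m i) / fac) *\<^sub>R X"
    if i: "i \<in> {1..k}" for i
  proof (cases "m i")
    case 0 then show ?thesis by (simp add: xmul_def)
  next
    case (Suc l)
    define m' where "m' = m(i := l)"
    define B' where "B' = B(i := B i + mat 1)"
    define C' where "C' = C(i := C i + mat 1)"
    have m'eq: "m(i := m i - 1) = m'" using Suc m'_def by simp
    have ms': "msupp k m'" using True i unfolding msupp_def m'_def by auto
    have fin: "finite {1..k}" by simp
    have M': "(\<Sum>j\<in>{1..k}. m' j) = M - 1"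
    proof -
      have "(\<Sum>j\<in>{1..k}. m' j) = m' i + (\<Sum>j\<in>{1..k}-{i}. m' j)"
        using sum.remove[OF fin i] by blast
      also have "(\<Sum>j\<in>{1..k}-{i}. m' j) = (\<Sum>j\<in>{1..k}-{i}. m j)"
        by (rule sum.cong) (auto simp: m'_def)
      also have "M = m i + (\<Sum>j\<in>{1..k}-{i}. m j)"
        unfolding M_def using sum.remove[OF fin i] by blast
      ultimately show ?thesis using Suc by (simp add: m'_def)
    qed
    have fac': "real (\<Prod>j\<in>{1..k}. fact (m' j)) = fac / real (m i)"
    proof -
      have "(\<Prod>j\<in>{1..k}. fact (m' j) :: nat) = fact (m' i) * (\<Prod>j\<in>{1..k}-{i}. fact (m' j))"
        using prod.remove[OF fin i] by blast
      also have "(\<Prod>j\<in>{1..k}-{i}. fact (m' j) :: nat) = (\<Prod>j\<in>{1..k}-{i}. fact (m j))"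
        by (rule prod.cong) (auto simp: m'_def)
      finally have a: "(\<Prod>j\<in>{1..k}. fact (m' j) :: nat) = fact l * (\<Prod>j\<in>{1..k}-{i}. fact (m j))"
        by (simp add: m'_def)
      have b: "(\<Prod>j\<in>{1..k}. fact (m j) :: nat) = fact (Suc l) * (\<Prod>j\<in>{1..k}-{i}. fact (m j))"
        using prod.remove[OF fin i, of "\<lambda>j. fact (m j)"] Suc by (simp only:)
      show ?thesis unfolding fac_def a b using Suc by (simp add: field_simps)
    qed
    have BA: "B i ** mpoch A2 (M - 1) = mpoch A2 (M - 1) ** B i"
      by (rule comm_mpoch) (simp add: A2 comm_one' AB[OF i, symmetric])
    have PBeq: "B i ** oprod (\<lambda>j. mpoch (B' j) (m' j)) k = PB"
    proof -
      have "B i ** oprod (\<lambda>j. mpoch (B' j) (m' j)) k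
          = oprod ((\<lambda>j. mpoch (B' j) (m' j))(i := B i ** mpoch (B' i) (m' i))) k"
      proof (rule oprod_left_ins)
        show "1 \<le> i" "i \<le> k" using i by auto
        fix j assume j: "1 \<le> j" "j \<le> k"
        show "B i ** mpoch (B' j) (m' j) = mpoch (B' j) (m' j) ** B i"
        proof (rule comm_mpoch)
          show "B i ** B' j = B' j ** B i"
            using BB[OF i, of j] j by (cases "j = i") (auto simp: B'_def comm_one)
        qed
      qed
      also have "\<dots> = PB" unfolding PB_def
      proof (rule oprod_cong)
        fix j assume j: "1 \<le> j" "j \<le> k"
        show "((\<lambda>j. mpoch (B' j) (m' j))(i := B i ** mpoch (B' i) (m' i))) j = mpoch (B j) (m j)"
          by (cases "j = i") (simp_all add: B'_def m'_def Suc mpoch_Suc_left del: mpoch.simps(2))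
      qed
      finally show ?thesis .
    qed
    have invC: "invertible (C j)" if "j \<in> {1..k}" for j
      using Cinv[OF that, of 0] by simp
    have invC': "invertible (mpoch (C' j) l')" if "j \<in> {1..k}" for j l'
    proof (rule invertible_mpoch)
      fix q
      show "invertible (C' j + real q *\<^sub>R mat 1)"
      proof (cases "j = i")
        case True
        have "C' j + real q *\<^sub>R mat 1 = C i + real (Suc q) *\<^sub>R mat 1"
          using True by (simp add: C'_def scaleR_left_distrib algebra_simps)
        then show ?thesis using Cinv[OF i, of "Suc q"] by (simp only:)
      next
        case False then show ?thesis using Cinv[OF that] by (simp add: C'_def)
      qed
    qed
    have PCeq: "oprod (\<lambda>j. matrix_inv (mpoch (C' j) (m' j))) k ** matrix_inv (C i) = PC"
    proof -
      have "oprod (\<lambda>j. matrix_inv (mpoch (C' j) (m' j))) k ** matrix_inv (C i)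
          = oprod ((\<lambda>j. matrix_inv (mpoch (C' j) (m' j)))(i := matrix_inv (mpoch (C' i) (m' i)) ** matrix_inv (C i))) k"
      proof (rule oprod_right_ins)
        show "1 \<le> i" "i \<le> k" using i by auto
        fix j assume j: "1 \<le> j" "j \<le> k"
        have cc: "C i ** C' j = C' j ** C i"
          using CC[OF i, of j] j by (cases "j = i") (auto simp: C'_def comm_one)
        show "matrix_inv (C i) ** matrix_inv (mpoch (C' j) (m' j)) = matrix_inv (mpoch (C' j) (m' j)) ** matrix_inv (C i)"
          using inv_comm[OF invC[OF i] invC'[of j "m' j"] comm_mpoch[OF cc]] j by auto
      qed
      also have "\<dots> = PC" unfolding PC_def
      proof (rule oprod_cong)
        fix j assume j: "1 \<le> j" "j \<le> k"
        show "((\<lambda>j. matrix_inv (mpoch (C' j) (m' j)))(i := matrix_inv (mpoch (C' i) (m' i)) ** matrix_inv (C i))) j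
              = matrix_inv (mpoch (C j) (m j))"
        proof (cases "j = i")
          case True
          have "matrix_inv (mpoch (C' i) (m' i)) ** matrix_inv (C i) = matrix_inv (C i ** mpoch (C' i) (m' i))"
            using inv_mult[OF invC[OF i] invC'[OF i]] by simp
          also have "\<dots> = matrix_inv (mpoch (C i) (m i))"
            by (simp add: C'_def m'_def Suc mpoch_Suc_left del: mpoch.simps(2))
          finally show ?thesis using True by simp
        next
          case False then show ?thesis by (simp add: C'_def m'_def)
        qed
      qed
      finally show ?thesis .
    qed
    define P where "P = mpoch A2 (M - 1)"
    define PB' where "PB' = oprod (\<lambda>j. mpoch (B' j) (m' j)) k"
    define PC' where "PC' = oprod (\<lambda>j. matrix_inv (mpoch (C' j) (m' j))) k"
    have L': "lauricellaA k A2 B' C' m' = (real (m i) / fac) *\<^sub>R (P ** PB' ** PC')"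
      using ms' fac' M' unfolding lauricellaA_def P_def PB'_def PC'_def
      by (simp del: fun_upd_apply add: field_simps)
    have core: "B i ** (P ** PB' ** PC') ** matrix_inv (C i) = X"
    proof -
      have "B i ** (P ** PB' ** PC') ** matrix_inv (C i) = (B i ** P) ** PB' ** PC' ** matrix_inv (C i)"
        by (simp add: matrix_mul_assoc)
      also have "\<dots> = P ** (B i ** PB') ** (PC' ** matrix_inv (C i))"
        using BA by (simp add: P_def matrix_mul_assoc)
      also have "\<dots> = X" using PBeq PCeq by (simp add: PB'_def PC'_def X_def P_def)
      finally show ?thesis .
    qed
    have "xmul i (\<lambda>m'. B i ** lauricellaA k A2 (B(i := B i + mat 1))
                  (C(i := C i + mat 1)) m' ** matrix_inv (C i)) m
        = B i ** lauricellaA k A2 B' C' m' ** matrix_inv (C i)"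
      using Suc m'eq by (simp add: xmul_def B'_def C'_def)
    also have "\<dots> = (real (m i) / fac) *\<^sub>R (B i ** (P ** PB' ** PC') ** matrix_inv (C i))"
      unfolding L' using Suc facpos
      by (simp add: matrix_scalar_ac scalar_matrix_assoc[symmetric])
    finally show ?thesis using core by simp
  qed
  have sumT: "(\<Sum>i=1..k. xmul i (\<lambda>m'. B i ** lauricellaA k A2 (B(i := B i + mat 1))
                  (C(i := C i + mat 1)) m' ** matrix_inv (C i)) m) = (real M / fac) *\<^sub>R X"
  proof -
    have "(\<Sum>i=1..k. xmul i (\<lambda>m'. B i ** lauricellaA k A2 (B(i := B i + mat 1))
                  (C(i := C i + mat 1)) m' ** matrix_inv (C i)) m)
        = (\<Sum>i=1..k. (real (m i) / fac) *\<^sub>R X)"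
      by (rule sum.cong) (simp_all add: T)
    also have "\<dots> = (\<Sum>i=1..k. real (m i) / fac) *\<^sub>R X"
      by (simp add: scaleR_sum_left)
    also have "(\<Sum>i=1..k. real (m i) / fac) = real M / fac"
      by (simp add: M_def sum_divide_distrib[symmetric])
    finally show ?thesis .
  qed
  have L2: "lauricellaA k A2 B C m = (1/fac) *\<^sub>R (mpoch A2 M ** PB ** PC)"
    unfolding lauricellaA_def M_def fac_def PB_def PC_def using True by simp
  have L1: "lauricellaA k A B C m = (1/fac) *\<^sub>R (mpoch A M ** PB ** PC)"
    unfolding lauricellaA_def M_def fac_def PB_def PC_def using True by simp
  have "lauricellaA k A2 B C m - lauricellaA k A B C m
      = (1/fac) *\<^sub>R ((mpoch A2 M - mpoch A M) ** PB ** PC)"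
    unfolding L1 L2 by (simp add: mm_rdiff scaleR_diff_right)
  also have "mpoch A2 M - mpoch A M = real M *\<^sub>R mpoch A2 (M - 1)"
    unfolding A2 by (rule poch_diff)
  also have "(1/fac) *\<^sub>R ((real M *\<^sub>R mpoch A2 (M - 1)) ** PB ** PC) = (real M / fac) *\<^sub>R X"
    by (simp add: X_def scalar_matrix_assoc[symmetric])
  finally show ?thesis using sumT by (simp add: algebra_simps)
qed


lemma xmul_lin:
  fixes L :: "nat \<Rightarrow> nat \<Rightarrow> (nat \<Rightarrow> nat) \<Rightarrow> 'r::finite cmat" and B Ci :: "nat \<Rightarrow> 'r cmat"
  shows "(\<Sum>i\<in>I. xmul i (\<lambda>m'. B i ** (\<Sum>n1\<in>S. L n1 i m') ** Ci i) m)
       = (\<Sum>n1\<in>S. \<Sum>i\<in>I. xmul i (\<lambda>m'. B i ** L n1 i m' ** Ci i) m)"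
proof -
  have "xmul i (\<lambda>m'. B i ** (\<Sum>n1\<in>S. L n1 i m') ** Ci i) m
      = (\<Sum>n1\<in>S. xmul i (\<lambda>m'. B i ** L n1 i m' ** Ci i) m)" for i
    by (simp add: xmul_def mm_sum_left mm_sum_right)
  then show ?thesis by (simp add: sum.swap[of _ I S])
qed

lemma part1:
  fixes A :: "'r::finite cmat" and B C :: "nat \<Rightarrow> 'r cmat"
  assumes Cinv: "\<And>i m. i \<in> {1..k} \<Longrightarrow> invertible (C i + real m *\<^sub>R mat 1)"
    and AB: "\<And>i. i \<in> {1..k} \<Longrightarrow> A ** B i = B i ** A"
    and BB: "\<And>i j. i \<in> {1..k} \<Longrightarrow> j \<in> {1..k} \<Longrightarrow> B i ** B j = B j ** B i"
    and CC: "\<And>i j. i \<in> {1..k} \<Longrightarrow> j \<in> {1..k} \<Longrightarrow> C i ** C j = C j ** C i"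
  shows "lauricellaA k (A + real n *\<^sub>R mat 1) B C m = lauricellaA k A B C m
     + (\<Sum>n1\<in>{1..n}. \<Sum>i=1..k. xmul i (\<lambda>m'. B i ** lauricellaA k (A + real n1 *\<^sub>R mat 1)
          (B(i := B i + mat 1)) (C(i := C i + mat 1)) m' ** matrix_inv (C i)) m)"
proof (induction n arbitrary: m)
  case 0 then show ?case by simp
next
  case (Suc n)
  have b: "lauricellaA k (A + real (Suc n) *\<^sub>R mat 1) B C m
     = lauricellaA k (A + real n *\<^sub>R mat 1) B C m
     + (\<Sum>i=1..k. xmul i (\<lambda>m'. B i ** lauricellaA k (A + real (Suc n) *\<^sub>R mat 1)
          (B(i := B i + mat 1)) (C(i := C i + mat 1)) m' ** matrix_inv (C i)) m)"
  proof (rule base[OF _ Cinv _ BB CC])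
    show "A + real (Suc n) *\<^sub>R mat 1 = A + real n *\<^sub>R mat 1 + mat 1"
      by (simp add: scaleR_left_distrib algebra_simps)
    fix i assume i: "i \<in> {1..k}"
    show "(A + real n *\<^sub>R mat 1) ** B i = B i ** (A + real n *\<^sub>R mat 1)"
      using comm_shift[of "B i" A "real n", OF AB[OF i, symmetric]] by simp
  qed auto
  have e: "{1..Suc n} = insert (Suc n) {1..n}" by auto
  show ?case unfolding b Suc.IH e by (simp del: fun_upd_apply add: algebra_simps)
qed

lemma part2:
  fixes A :: "'r::finite cmat" and B C :: "nat \<Rightarrow> 'r cmat"
  assumes Cinv: "\<And>i m. i \<in> {1..k} \<Longrightarrow> invertible (C i + real m *\<^sub>R mat 1)"
    and AB: "\<And>i. i \<in> {1..k} \<Longrightarrow> A ** B i = B i ** A"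
    and BB: "\<And>i j. i \<in> {1..k} \<Longrightarrow> j \<in> {1..k} \<Longrightarrow> B i ** B j = B j ** B i"
    and CC: "\<And>i j. i \<in> {1..k} \<Longrightarrow> j \<in> {1..k} \<Longrightarrow> C i ** C j = C j ** C i"
  shows "lauricellaA k (A - real n *\<^sub>R mat 1) B C m = lauricellaA k A B C m
     - (\<Sum>n1<n. \<Sum>i=1..k. xmul i (\<lambda>m'. B i ** lauricellaA k (A - real n1 *\<^sub>R mat 1)
          (B(i := B i + mat 1)) (C(i := C i + mat 1)) m' ** matrix_inv (C i)) m)"
proof (induction n arbitrary: m)
  case 0 then show ?case by simp
next
  case (Suc n)
  have b: "lauricellaA k (A - real n *\<^sub>R mat 1) B C m
     = lauricellaA k (A - real (Suc n) *\<^sub>R mat 1) B C m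
     + (\<Sum>i=1..k. xmul i (\<lambda>m'. B i ** lauricellaA k (A - real n *\<^sub>R mat 1)
          (B(i := B i + mat 1)) (C(i := C i + mat 1)) m' ** matrix_inv (C i)) m)"
  proof (rule base[OF _ Cinv _ BB CC])
    show "A - real n *\<^sub>R mat 1 = A - real (Suc n) *\<^sub>R mat 1 + mat 1"
      by (simp add: scaleR_left_distrib algebra_simps)
    fix i assume i: "i \<in> {1..k}"
    show "(A - real (Suc n) *\<^sub>R mat 1) ** B i = B i ** (A - real (Suc n) *\<^sub>R mat 1)"
      using comm_shift_minus[of "B i" A "real (Suc n)", OF AB[OF i, symmetric]] by simp
  qed auto
  show ?case using b Suc.IH[of m] by (simp del: fun_upd_apply add: algebra_simps)
qed

theorem mainTheorem1:
  fixes k n :: nat and A :: "'r::finite cmat" and B C :: "nat \<Rightarrow> 'r cmat"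
  assumes "k \<ge> 1"
    and "\<And>i m. i \<in> {1..k} \<Longrightarrow> invertible (C i + real m *\<^sub>R mat 1)"
    and "\<And>i. i \<in> {1..k} \<Longrightarrow> A ** B i = B i ** A"
    and "\<And>i j. i \<in> {1..k} \<Longrightarrow> j \<in> {1..k} \<Longrightarrow> B i ** B j = B j ** B i"
    and "\<And>i j. i \<in> {1..k} \<Longrightarrow> j \<in> {1..k} \<Longrightarrow> C i ** C j = C j ** C i"
    and "n \<ge> 1"
    and "\<And>m. invertible (A + real m *\<^sub>R mat 1)"
  shows "(\<forall>m. lauricellaA k (A + real n *\<^sub>R mat 1) B C m =
            lauricellaA k A B C m
            + (\<Sum>i=1..k. xmul i (\<lambda>m'. B i **
                 (\<Sum>n1=1..n. lauricellaA k (A + real n1 *\<^sub>R mat 1)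
                     (B(i := B i + mat 1)) (C(i := C i + mat 1)) m')
                 ** matrix_inv (C i)) m))
       \<and> ((\<forall>n1\<le>n. invertible (A - real n1 *\<^sub>R mat 1)) \<longrightarrow>
          (\<forall>m. lauricellaA k (A - real n *\<^sub>R mat 1) B C m =
            lauricellaA k A B C m
            - (\<Sum>i=1..k. xmul i (\<lambda>m'. B i **
                 (\<Sum>n1=0..n-1. lauricellaA k (A - real n1 *\<^sub>R mat 1)
                     (B(i := B i + mat 1)) (C(i := C i + mat 1)) m')
                 ** matrix_inv (C i)) m)))"
proof -
  have e: "{0..n-1} = {..<n}" using assms(6) by auto
  show ?thesis
  proof (intro conjI allI impI)
    fix m
    show "lauricellaA k (A + real n *\<^sub>R mat 1) B C m =
            lauricellaA k A B C m
            + (\<Sum>i=1..k. xmul i (\<lambda>m'. B i **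
                 (\<Sum>n1=1..n. lauricellaA k (A + real n1 *\<^sub>R mat 1)
                     (B(i := B i + mat 1)) (C(i := C i + mat 1)) m')
                 ** matrix_inv (C i)) m)"
      unfolding xmul_lin by (rule part1[OF assms(2-5)])
  next
    fix m
    show "lauricellaA k (A - real n *\<^sub>R mat 1) B C m =
            lauricellaA k A B C m
            - (\<Sum>i=1..k. xmul i (\<lambda>m'. B i **
                 (\<Sum>n1=0..n-1. lauricellaA k (A - real n1 *\<^sub>R mat 1)
                     (B(i := B i + mat 1)) (C(i := C i + mat 1)) m')
                 ** matrix_inv (C i)) m)"
      unfolding xmul_lin e by (rule part2[OF assms(2-5)])
  qed
qed

end
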